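(* Let $V\in\mathbb{R}^{\ell\times m}$ have rows $v_1,\dots,v_\ell\in\mathbb{R}^m$ and columns $v_{*1},\dots,v_{*m}\in\mathbb{R}^\ell$. Suppose $\|v_i\|_2=1$ for all $i\in[\ell]$, and let $\theta\ge 0$ satisfy $\theta\|v_{*j}\|_1\le 1/3$ for all $j\in[m]$. Then for every $\mu=(\mu_1,\dots,\mu_\ell)\in\mathbb{R}^\ell$ there exists $y\in\mathbb{R}^m$ with $\|y\|_\infty\le 1/3$ and \[|\langle v_i,y\rangle-\mu_i|\ge\theta\quad\text{for all } i\in[\ell].\] *)

theory Defs
  imports "HOL-Analysis.Analysis"
begin

end

theory Submission
  imports Defs
begin

theorem mainTheorem4:
  fixes V :: "real ^ 'm ^ 'l" and \<theta> :: real and \<mu> :: "real ^ 'l"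
  assumes rows_unit: "\<forall>i. norm (V $ i) = 1"
    and theta_nonneg: "\<theta> \<ge> 0"
    and cols: "\<forall>j. \<theta> * (\<Sum>i\<in>UNIV. \<bar>V $ i $ j\<bar>) \<le> 1/3"
  shows "\<exists>y :: real ^ 'm. (\<forall>j. \<bar>y $ j\<bar> \<le> 1/3) \<and>
           (\<forall>i. \<bar>inner (V $ i) y - \<mu> $ i\<bar> \<ge> \<theta>)"
proof -
  define sg :: "('l \<Rightarrow> bool) \<Rightarrow> 'l \<Rightarrow> real" where "sg = (\<lambda>\<sigma> i. if \<sigma> i then 1 else -1)"
  define w where "w = (\<lambda>\<sigma>. \<Sum>k\<in>UNIV. sg \<sigma> k *\<^sub>R V $ k)"
  define P where "P = (\<lambda>\<sigma>. (\<theta>/2) * (norm (w \<sigma>))^2 - (\<Sum>k\<in>UNIV. sg \<sigma> k * \<mu> $ k))"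
  have fin: "finite (range P)" by simp
  have "Max (range P) \<in> range P" by (rule Max_in) (use fin in auto)
  then obtain \<sigma> where \<sigma>: "P \<sigma> = Max (range P)" by (metis imageE)
  have max: "P \<tau> \<le> P \<sigma>" for \<tau> using fin \<sigma> by simp
  define y where "y = \<theta> *\<^sub>R w \<sigma>"
  have sq: "sg \<sigma> i * sg \<sigma> i = 1" for i by (simp add: sg_def)
  have sabs: "\<bar>sg \<sigma> i\<bar> = 1" for i by (simp add: sg_def)
  have "\<bar>y $ j\<bar> \<le> 1/3" for j
  proof -
    have "y $ j = \<theta> * (\<Sum>k\<in>UNIV. sg \<sigma> k * V $ k $ j)"
      by (simp add: y_def w_def)
    also have "\<bar>\<dots>\<bar> \<le> \<theta> * (\<Sum>k\<in>UNIV. \<bar>V $ k $ j\<bar>)"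
    proof -
      have "\<bar>\<Sum>k\<in>UNIV. sg \<sigma> k * V $ k $ j\<bar> \<le> (\<Sum>k\<in>UNIV. \<bar>sg \<sigma> k * V $ k $ j\<bar>)"
        by (rule sum_abs)
      also have "\<dots> = (\<Sum>k\<in>UNIV. \<bar>V $ k $ j\<bar>)" by (simp add: abs_mult sabs)
      finally show ?thesis using theta_nonneg
        by (simp add: abs_mult mult_left_mono)
    qed
    finally show ?thesis using cols[rule_format, of j] by linarith
  qed
  moreover have "\<bar>inner (V $ i) y - \<mu> $ i\<bar> \<ge> \<theta>" for i
  proof -
    define \<tau> where "\<tau> = \<sigma>(i := \<not> \<sigma> i)"
    define s where "s = sg \<sigma> i"
    define v where "v = V $ i"
    have sgt: "sg \<tau> k = sg \<sigma> k + (if k = i then -2 * s else 0)" for k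
      by (simp add: sg_def \<tau>_def s_def)
    have wt: "w \<tau> = w \<sigma> - (2 * s) *\<^sub>R v"
      unfolding w_def sgt by (simp add: scaleR_add_left sum.distrib v_def if_distrib[of "\<lambda>x. x *\<^sub>R _"] cong: if_cong)
    have mt: "(\<Sum>k\<in>UNIV. sg \<tau> k * \<mu> $ k) = (\<Sum>k\<in>UNIV. sg \<sigma> k * \<mu> $ k) - 2 * s * \<mu> $ i"
      unfolding sgt by (simp add: distrib_right sum.distrib if_distrib[of "\<lambda>x. x * _"] cong: if_cong)
    have nv: "inner v v = 1" using rows_unit by (simp add: v_def norm_eq_sqrt_inner)
    have ss: "s * s = 1" using sq s_def by simp
    have "(norm (w \<tau>))^2 = (norm (w \<sigma>))^2 - 4 * s * inner v (w \<sigma>) + 4 * (s * s) * inner v v"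
      unfolding wt power2_norm_eq_inner by (simp add: inner_diff algebra_simps inner_commute)
    hence nt: "(norm (w \<tau>))^2 = (norm (w \<sigma>))^2 - 4 * s * inner v (w \<sigma>) + 4"
      using ss nv by simp
    have "P \<tau> \<le> P \<sigma>" by (rule max)
    hence "(\<theta>/2) * ((norm (w \<sigma>))^2 - 4 * s * inner v (w \<sigma>) + 4) - ((\<Sum>k\<in>UNIV. sg \<sigma> k * \<mu> $ k) - 2 * s * \<mu> $ i)
        \<le> (\<theta>/2) * (norm (w \<sigma>))^2 - (\<Sum>k\<in>UNIV. sg \<sigma> k * \<mu> $ k)"
      unfolding P_def using nt mt by simp
    hence key: "s * (\<theta> * inner v (w \<sigma>) - \<mu> $ i) \<ge> \<theta>" by (simp add: algebra_simps)
    have "inner (V $ i) y = \<theta> * inner v (w \<sigma>)" by (simp add: y_def v_def)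
    moreover have "s * (\<theta> * inner v (w \<sigma>) - \<mu> $ i) \<le> \<bar>\<theta> * inner v (w \<sigma>) - \<mu> $ i\<bar>"
    proof -
      have "s * x \<le> \<bar>s * x\<bar>" for x by simp
      moreover have "\<bar>s * x\<bar> = \<bar>x\<bar>" for x using sabs s_def by (simp add: abs_mult)
      ultimately show ?thesis by metis
    qed
    ultimately show ?thesis using key by simp
  qed
  ultimately show ?thesis by blast
qed

end
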